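(* Let $(a,b)\in\mathcal{B}$ with $b$ even, $a\ge 1$, $a+b\ge 1$ and $b\neq 0$. Then $U=\{(a,b)\}$ is unavoidable.
   Context: The bicyclic inverse semigroup is $\mathcal{B}=\{(a,b)\in\mathbb{Z}\times\mathbb{Z}\mid a\ge 0,\ a+b\ge 0\}$ with multiplication $(a,b)(c,d)=(\max\{c+d,a\}-d,\ b+d)$. A subset $U\subseteq\mathcal{B}$ is called avoidable if $\mathcal{B}$ can be partitioned into two subsets $A$ and $B$ such that no element of $U$ can be written as a product $xy$ of two distinct elements $x\neq y$ both in $A$, or both in $B$. A set is unavoidable if it is not avoidable. *)

theory Defs
  imports Main
begin

definition bicyclic :: "(int \<times> int) set" where
  "bicyclic = {(a, b). a \<ge> 0 \<and> a + b \<ge> 0}"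

fun bmult :: "int \<times> int \<Rightarrow> int \<times> int \<Rightarrow> int \<times> int" where
  "bmult (a, b) (c, d) = (max (c + d) a - d, b + d)"

definition avoidable :: "(int \<times> int) set \<Rightarrow> bool" where
  "avoidable U \<longleftrightarrow> (\<exists>A B. A \<union> B = bicyclic \<and> A \<inter> B = {} \<and>
     (\<forall>x\<in>A. \<forall>y\<in>A. x \<noteq> y \<longrightarrow> bmult x y \<notin> U) \<and>
     (\<forall>x\<in>B. \<forall>y\<in>B. x \<noteq> y \<longrightarrow> bmult x y \<notin> U))"

definition unavoidable :: "(int \<times> int) set \<Rightarrow> bool" where
  "unavoidable U \<longleftrightarrow> \<not> avoidable U"

end

theory Submission
  imports Defs
begin

theorem proposition2p1:
  fixes a b :: int
  assumes "(a, b) \<in> bicyclic" and "even b" and "a \<ge> 1" and "a + b \<ge> 1" and "b \<noteq> 0"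
  shows "unavoidable {(a, b)}"
proof -
  obtain c where bc: "b = 2 * c" using assms(2) by (metis evenE)
  define r where "r = min a (a + c) - 1"
  let ?x = "(a, c)" and ?y = "(a + c, c)" and ?z = "(r, c)"
  have cz: "c \<noteq> 0" using bc assms by auto
  have mem: "?x \<in> bicyclic" "?y \<in> bicyclic" "?z \<in> bicyclic"
    using assms bc unfolding bicyclic_def r_def by auto
  have d: "?x \<noteq> ?y" "?x \<noteq> ?z" "?y \<noteq> ?z" "?y \<noteq> ?x" "?z \<noteq> ?x" "?z \<noteq> ?y"
    using cz unfolding r_def by auto
  have p1: "bmult ?y ?x = (a, b)" using bc by simp
  have p2: "bmult ?y ?z = (a, b)" using bc unfolding r_def by auto
  have p3: "bmult ?z ?x = (a, b)" using bc unfolding r_def by auto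
  show ?thesis unfolding unavoidable_def avoidable_def
  proof
    assume "\<exists>A B. A \<union> B = bicyclic \<and> A \<inter> B = {} \<and>
     (\<forall>x\<in>A. \<forall>y\<in>A. x \<noteq> y \<longrightarrow> bmult x y \<notin> {(a, b)}) \<and>
     (\<forall>x\<in>B. \<forall>y\<in>B. x \<noteq> y \<longrightarrow> bmult x y \<notin> {(a, b)})"
    then obtain A B where AB: "A \<union> B = bicyclic"
      and hA: "\<forall>x\<in>A. \<forall>y\<in>A. x \<noteq> y \<longrightarrow> bmult x y \<notin> {(a, b)}"
      and hB: "\<forall>x\<in>B. \<forall>y\<in>B. x \<noteq> y \<longrightarrow> bmult x y \<notin> {(a, b)}" by blast
    have "?x \<in> A \<or> ?x \<in> B" "?y \<in> A \<or> ?y \<in> B" "?z \<in> A \<or> ?z \<in> B"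
      using AB mem by auto
    then show False using hA hB p1 p2 p3 d by blast
  qed
qed

end
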